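(* Let $x\in F(2)$ have a normal form that is a positive word $x=x_{i_1}^{r_1}x_{i_2}^{r_2}\cdots x_{i_n}^{r_n}$ with $n\ge1$, $i_1<\dots<i_n$, $r_k\ge1$. Let $$N(x)=\max\{\,i_k+r_k+r_{k+1}+\dots+r_n+1 : k=1,\dots,n\,\}.$$ Then: (1) $N(x)$ equals the number of carets in either tree of the reduced $2$-tree diagram for $x$; (2) $N(x)$ equals the $y$-coordinate of the last breakpoint of the graph of $x$ regarded as a homeomorphism of $\mathbb{R}$; (3) with $D(x)=r_1+\dots+r_n+i_n$, one has $\frac{D(x)}{2}\le N(x)\le D(x)+1$, so $N(x)$ is quasi-equivalent to the word length of $x$.
   Context: $F(2)$ (Thompson's group $F$) is the group of piecewise-linear orientation-preserving homeomorphisms of $[0,1]$ with breakpoints in $\mathbb{Z}[1/2]$ and slopes powers of $2$, with presentation $\langle x_0,x_1,\dots\mid x_i^{-1}x_jx_i=x_{j+1}\ (i<j)\rangle$; products are compositions on the right ($x_ix_j$ means first $x_i$, then $x_j$). Normal forms: every element is uniquely $x_{i_1}^{r_1}\cdots x_{i_n}^{r_n}x_{j_m}^{-s_m}\cdots x_{j_1}^{-s_1}$ with $i_1<\dots<i_n$, $j_1<\dots<j_m$, positive exponents, and such that if both $x_i$ and $x_i^{-1}$ occur then $x_{i+1}$ or $x_{i+1}^{-1}$ occurs. Realization on $\mathbb{R}$: $x_i\mapsto f_i$ with $f_i(t)=t$ for $t\le i$, $f_i(t)=2t-i$ for $i\le t\le i+1$, $f_i(t)=t+1$ for $t\ge i+1$,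 gives an isomorphism of $F(2)$ onto a group of piecewise-linear homeomorphisms of $\mathbb{R}$ (compositions on the right). Tree diagrams: a rooted $2$-tree is a finite rooted tree in which each non-leaf vertex (including the root, which is not a leaf) has $2$ ordered children; a caret is a non-leaf vertex with its children. Such a tree encodes a subdivision of $[0,1]$: the root is $[0,1]$ and a non-leaf vertex with interval $I$ has children the $2$ equal consecutive subintervals of $I$; leaves give the intervals of the subdivision, ordered left to right. An element $x$ is represented by a pair $(S,T)$ of rooted trees with the same number of leaves, $x$ mapping the $k$-th leaf interval of $S$ affinely onto the $k$-th leaf interval of $T$. The diagram is reduced if there is no caret all of whose children are leaves in $S$ such that the corresponding leaves of $T$ are exactly all children of a caret of $T$; each element has a unique reduced diagram, and its two trees have equally many carets. *)

theory Defs
  imports Complex_Main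
begin

text \<open>A positive normal form x_{i_1}^{r_1} ... x_{i_n}^{r_n} is encoded as the list
  [(i_1,r_1), ..., (i_n,r_n)].\<close>

definition pos_nf :: "(nat \<times> nat) list \<Rightarrow> bool" where
  "pos_nf ps \<longleftrightarrow> ps \<noteq> [] \<and> sorted_wrt (<) (map fst ps) \<and> (\<forall>p\<in>set ps. snd p \<ge> 1)"

text \<open>N(x) = max over k of i_k + r_k + ... + r_n + 1 (k is 0-based here).\<close>
definition Nval :: "(nat \<times> nat) list \<Rightarrow> nat" where
  "Nval ps = Max ((\<lambda>k. fst (ps ! k) + sum_list (map snd (drop k ps)) + 1) ` {..<length ps})"

definition Dval :: "(nat \<times> nat) list \<Rightarrow> nat" where
  "Dval ps = sum_list (map snd ps) + fst (last ps)"

definition fR :: "nat \<Rightarrow> real \<Rightarrow> real" where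
  "fR i t = (if t \<le> real i then t else if t \<le> real i + 1 then 2 * t - real i else t + 1)"

definition fRinv :: "nat \<Rightarrow> real \<Rightarrow> real" where
  "fRinv i t = (if t \<le> real i then t else if t \<le> real i + 2 then (t + real i) / 2 else t - 1)"

text \<open>Right composition: first x_{i_1}^{r_1}, then the rest.\<close>
fun posR :: "(nat \<times> nat) list \<Rightarrow> real \<Rightarrow> real" where
  "posR [] = id"
| "posR ((i, r) # ps) = posR ps \<circ> (fR i ^^ r)"

text \<open>Words in the generators x_0, x_1 and their inverses: (i, True) is x_i,
  (i, False) is x_i^{-1}; evaluated on the real line with right composition.\<close>
fun genR :: "nat \<times> bool \<Rightarrow> real \<Rightarrow> real" where
  "genR (i, True) = fR i"
| "genR (i, False) = fRinv i"

fun wordR :: "(nat \<times> bool) list \<Rightarrow> real \<Rightarrow> real" where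
  "wordR [] = id"
| "wordR (g # ws) = wordR ws \<circ> genR g"

definition word_length :: "(real \<Rightarrow> real) \<Rightarrow> nat" where
  "word_length g = (LEAST n. \<exists>ws. length ws = n \<and> (\<forall>w\<in>set ws. fst w \<le> 1) \<and> wordR ws = g)"

definition g0 :: "real \<Rightarrow> real" where
  "g0 t = (if t \<le> 1/4 then 2 * t else if t \<le> 1/2 then t + 1/4 else t / 2 + 1/2)"

definition gI :: "nat \<Rightarrow> real \<Rightarrow> real" where
  "gI i t = (let a = 1 - 1 / 2 ^ i; c = (2::real) ^ i in
             if t \<le> a then t else a + g0 (c * (t - a)) / c)"

fun posI :: "(nat \<times> nat) list \<Rightarrow> real \<Rightarrow> real" where
  "posI [] = id"
| "posI ((i, r) # ps) = posI ps \<circ> (gI i ^^ r)"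

datatype tree = Leaf | Node tree tree

fun carets :: "tree \<Rightarrow> nat" where
  "carets Leaf = 0"
| "carets (Node l r) = Suc (carets l + carets r)"

fun nleaves :: "tree \<Rightarrow> nat" where
  "nleaves Leaf = 1"
| "nleaves (Node l r) = nleaves l + nleaves r"

text \<open>Leaf intervals of the subdivision of [a,b], left to right.\<close>
fun ivs :: "tree \<Rightarrow> real \<Rightarrow> real \<Rightarrow> (real \<times> real) list" where
  "ivs Leaf a b = [(a, b)]"
| "ivs (Node l r) a b = ivs l a ((a + b) / 2) @ ivs r ((a + b) / 2) b"

text \<open>cherries t k: indices j (leaves numbered from k) such that leaves j, j+1 are
  exactly the two children of a caret.\<close>
fun cherries :: "tree \<Rightarrow> nat \<Rightarrow> nat set" where
  "cherries Leaf k = {}"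
| "cherries (Node Leaf Leaf) k = {k}"
| "cherries (Node l r) k = cherries l k \<union> cherries r (k + nleaves l)"

definition rooted_tree :: "tree \<Rightarrow> bool" where
  "rooted_tree t \<longleftrightarrow> t \<noteq> Leaf"

definition represents :: "(real \<Rightarrow> real) \<Rightarrow> tree \<Rightarrow> tree \<Rightarrow> bool" where
  "represents g S T \<longleftrightarrow> rooted_tree S \<and> rooted_tree T \<and> nleaves S = nleaves T \<and>
     (\<forall>k < nleaves S. \<forall>t. fst (ivs S 0 1 ! k) \<le> t \<and> t \<le> snd (ivs S 0 1 ! k) \<longrightarrow>
        g t = fst (ivs T 0 1 ! k) + (snd (ivs T 0 1 ! k) - fst (ivs T 0 1 ! k))
              / (snd (ivs S 0 1 ! k) - fst (ivs S 0 1 ! k)) * (t - fst (ivs S 0 1 ! k)))"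

definition reduced :: "tree \<Rightarrow> tree \<Rightarrow> bool" where
  "reduced S T \<longleftrightarrow> cherries S 0 \<inter> cherries T 0 = {}"

end

theory Submission
  imports Defs
begin

fun sumr :: "(nat \<times> nat) list \<Rightarrow> nat" where
  "sumr [] = 0"
| "sumr (p # ps) = snd p + sumr ps"

fun Nr :: "(nat \<times> nat) list \<Rightarrow> nat" where
  "Nr [] = 0"
| "Nr (p # ps) = max (fst p + snd p + sumr ps + 1) (Nr ps)"

lemma sumr_eq: "sumr ps = sum_list (map snd ps)"
  by (induct ps) auto

lemma fR_expand: "a \<le> b \<Longrightarrow> b - a \<le> fR i b - fR i a"
  unfolding fR_def by auto

lemma fR_lip: "a \<le> b \<Longrightarrow> fR i b - fR i a \<le> 2 * (b - a)"
  unfolding fR_def by auto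

lemma fRp_expand: "a \<le> b \<Longrightarrow> b - a \<le> (fR i ^^ r) b - (fR i ^^ r) a"
proof (induct r)
  case 0 then show ?case by simp
next
  case (Suc r)
  have "(fR i ^^ r) a \<le> (fR i ^^ r) b" using Suc by linarith
  from fR_expand[OF this, of i] Suc show ?case by simp
qed

lemma fRp_lip: "a \<le> b \<Longrightarrow> (fR i ^^ r) b - (fR i ^^ r) a \<le> 2 ^ r * (b - a)"
proof (induct r)
  case 0 then show ?case by simp
next
  case (Suc r)
  have "(fR i ^^ r) a \<le> (fR i ^^ r) b" using fRp_expand[OF Suc(2), where i=i and r=r] Suc(2) by linarith
  from fR_lip[OF this, of i] Suc show ?case by simp
qed

lemma fRp_trans: "real i + 1 \<le> t \<Longrightarrow> (fR i ^^ r) t = t + r"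
proof (induct r)
  case 0 then show ?case by simp
next
  case (Suc r)
  then show ?case by (simp add: fR_def)
qed

lemma fRp_kink: assumes "r \<ge> 1" "real i \<le> t" "t \<le> real i + 1"
  shows "2 * (real i + 1 - t) \<le> (fR i ^^ r) (real i + 1) - (fR i ^^ r) t"
proof -
  obtain r' where r: "r = Suc r'" using assms(1) by (cases r) auto
  have "(fR i ^^ r) x = (fR i ^^ r') (fR i x)" for x
    unfolding r by (simp add: funpow_Suc_right del: funpow.simps)
  moreover have "fR i (real i + 1) - fR i t = 2 * (real i + 1 - t)"
    using assms unfolding fR_def by auto
  moreover have "fR i t \<le> fR i (real i + 1)" using assms unfolding fR_def by auto
  ultimately show ?thesis using fRp_expand[of "fR i t" "fR i (real i + 1)", where i=i and r=r'] by simp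
qed

lemma posR_expand: "a \<le> b \<Longrightarrow> b - a \<le> posR ps b - posR ps a"
proof (induct ps arbitrary: a b)
  case Nil then show ?case by simp
next
  case (Cons p ps)
  obtain i r where p: "p = (i, r)" by (cases p)
  have "(fR i ^^ r) a \<le> (fR i ^^ r) b" using fRp_expand[OF Cons(2), where i=i and r=r] Cons(2) by linarith
  from Cons(1)[OF this] fRp_expand[OF Cons(2), where i=i and r=r] show ?case by (simp add: p)
qed

lemma posR_P1: "real (Nr ps) - real (sumr ps) \<le> t \<Longrightarrow> posR ps t = t + real (sumr ps)"
proof (induct ps arbitrary: t)
  case Nil then show ?case by simp
next
  case (Cons p ps)
  obtain i r where p: "p = (i, r)" by (cases p)
  have t1: "real i + 1 \<le> t" using Cons(2) by (simp add: p)
  have h: "(fR i ^^ r) t = t + r" using fRp_trans[OF t1] .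
  have "real (Nr ps) - real (sumr ps) \<le> t + r" using Cons(2) by (simp add: p)
  from Cons(1)[OF this] h show ?case by (simp add: p)
qed

lemma posR_P2: "ps \<noteq> [] \<Longrightarrow> \<forall>p\<in>set ps. snd p \<ge> 1 \<Longrightarrow>
   \<exists>d>0. \<forall>x. real (Nr ps) - real (sumr ps) - d < x \<and> x \<le> real (Nr ps) - real (sumr ps) \<longrightarrow>
      posR ps x \<le> real (Nr ps) - 2 * (real (Nr ps) - real (sumr ps) - x)"
proof (induct ps)
  case Nil then show ?case by simp
next
  case (Cons p ps)
  obtain i r where p: "p = (i, r)" by (cases p)
  have r1: "r \<ge> 1" using Cons(3) p by auto
  define N' where "N' = Nr ps"
  define S' where "S' = sumr ps"
  define h where "h = fR i ^^ r"
  have pos: "posR (p # ps) x = posR ps (h x)" for x by (simp add: p h_def)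
  show ?case
  proof (cases "N' < i + r + S' + 1")
    case True
    have N: "Nr (p # ps) = i + r + S' + 1" "sumr (p#ps) = r + S'" using True by (auto simp: p N'_def S'_def)
    show ?thesis
    proof (rule exI[of _ 1], intro conjI allI impI)
      fix x assume x: "real (Nr (p # ps)) - real (sumr (p # ps)) - 1 < x \<and> x \<le> real (Nr (p # ps)) - real (sumr (p # ps))"
      hence x': "real i < x" "x \<le> real i + 1" using N by auto
      have k: "2 * (real i + 1 - x) \<le> h (real i + 1) - h x" unfolding h_def using fRp_kink[OF r1, of i x] x' by auto
      have hi: "h (real i + 1) = real i + 1 + r" unfolding h_def by (rule fRp_trans) simp
      have e: "h (real i + 1) - h x \<le> posR ps (h (real i + 1)) - posR ps (h x)"
        using posR_expand[of "h x" "h (real i + 1)" ps] k x' by (smt (verit))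
      have "posR ps (h (real i + 1)) = h (real i + 1) + S'"
        using posR_P1[of ps "h (real i + 1)"] hi True unfolding N'_def S'_def by simp
      then show "posR (p # ps) x \<le> real (Nr (p # ps)) - 2 * (real (Nr (p # ps)) - real (sumr (p # ps)) - x)"
        using pos[of x] e k hi N by simp
    qed simp
  next
    case False
    hence ne: "ps \<noteq> []" unfolding N'_def by auto
    have N: "Nr (p # ps) = N'" "sumr (p#ps) = r + S'" using False by (auto simp: p N'_def S'_def)
    obtain d where d: "d > 0" "\<forall>x. real N' - real S' - d < x \<and> x \<le> real N' - real S' \<longrightarrow>
      posR ps x \<le> real N' - 2 * (real N' - real S' - x)"
      using Cons(1)[OF ne] Cons(3) unfolding N'_def S'_def by auto
    define t0 where "t0 = real N' - real S' - r"
    have t0i: "real i + 1 \<le> t0" using False unfolding t0_def by simp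
    show ?thesis
    proof (rule exI[of _ "d / 2 ^ r"], intro conjI allI impI)
      show "d / 2 ^ r > 0" using d by simp
      fix x assume x: "real (Nr (p # ps)) - real (sumr (p # ps)) - d / 2 ^ r < x \<and> x \<le> real (Nr (p # ps)) - real (sumr (p # ps))"
      hence x': "t0 - d / 2 ^ r < x" "x \<le> t0" using N unfolding t0_def by auto
      have ht: "h t0 = t0 + r" unfolding h_def by (rule fRp_trans[OF t0i])
      have e1: "t0 - x \<le> h t0 - h x" unfolding h_def using fRp_expand x' by auto
      have e2: "h t0 - h x \<le> 2 ^ r * (t0 - x)" unfolding h_def using fRp_lip x' by auto
      have "2 ^ r * (t0 - x) < 2 ^ r * (d / 2 ^ r)" using x' by (intro mult_strict_left_mono) auto
      hence "2 ^ r * (t0 - x) < d" by simp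
      hence "real N' - real S' - d < h x \<and> h x \<le> real N' - real S'" using e1 e2 ht x' unfolding t0_def by auto
      hence "posR ps (h x) \<le> real N' - 2 * (real N' - real S' - h x)" using d by blast
      then show "posR (p # ps) x \<le> real (Nr (p # ps)) - 2 * (real (Nr (p # ps)) - real (sumr (p # ps)) - x)"
        using pos[of x] e1 ht N unfolding t0_def by simp
    qed
  qed
qed

lemma kink_nondiff:
  fixes g :: "real \<Rightarrow> real"
  assumes right: "\<And>y. y \<ge> t0 \<Longrightarrow> g y = y + S"
    and d: "d > 0" and left: "\<And>x. t0 - d < x \<Longrightarrow> x \<le> t0 \<Longrightarrow> g x \<le> g t0 - 2 * (t0 - x)"
  shows "\<not> g differentiable (at t0)"
proof
  assume "g differentiable (at t0)"
  then obtain D where D: "(g has_real_derivative D) (at t0)" by (auto simp: real_differentiable_def)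
  hence lim: "((\<lambda>y. (g y - g t0) / (y - t0)) \<longlongrightarrow> D) (at t0)" by (simp add: has_field_derivative_iff)
  have limr: "((\<lambda>y. (g y - g t0) / (y - t0)) \<longlongrightarrow> D) (at_right t0)"
    using lim by (rule tendsto_mono[OF at_le, rotated]) simp
  have liml: "((\<lambda>y. (g y - g t0) / (y - t0)) \<longlongrightarrow> D) (at_left t0)"
    using lim by (rule tendsto_mono[OF at_le, rotated]) simp
  have ev1: "eventually (\<lambda>y. (g y - g t0) / (y - t0) = 1) (at_right t0)"
    using eventually_at_right_real[of t0 "t0 + 1"]
    by (rule eventually_mono) (auto simp: right)
  have "((\<lambda>y. (g y - g t0) / (y - t0)) \<longlongrightarrow> 1) (at_right t0)"
    by (rule tendsto_eventually[THEN tendsto_cong[THEN iffD1, rotated]]) (use ev1 in \<open>auto elim: eventually_mono\<close>)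
  hence D1: "D = 1" using limr tendsto_unique trivial_limit_at_right_real by blast
  have ev0: "eventually (\<lambda>x. x \<in> {t0 - d<..<t0}) (at_left t0)"
    by (rule eventually_at_left_real) (use d in simp)
  have ev2: "eventually (\<lambda>y. 2 \<le> (g y - g t0) / (y - t0)) (at_left t0)"
    using ev0
  proof (rule eventually_mono)
    fix y assume y: "y \<in> {t0 - d<..<t0}"
    hence "g y - g t0 \<le> 2 * (y - t0)" using left[of y] by auto
    moreover have "y - t0 < 0" using y by auto
    ultimately show "2 \<le> (g y - g t0) / (y - t0)" by (simp add: le_divide_eq)
  qed
  have "2 \<le> D" using tendsto_lowerbound[OF liml ev2] by simp
  with D1 show False by simp
qed

lemma trans_diff:
  fixes g :: "real \<Rightarrow> real"
  assumes right: "\<And>y. y \<ge> t0 \<Longrightarrow> g y = y + S" and s: "s > t0"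
  shows "g differentiable (at s)"
proof -
  have "((\<lambda>x. x + S) has_real_derivative 1) (at s)" by (auto intro!: derivative_eq_intros)
  hence "(g has_real_derivative 1) (at s)"
    by (rule has_field_derivative_transform_within_open[where S="{t0<..}"]) (use s right in auto)
  thus ?thesis by (auto simp: real_differentiable_def)
qed

lemma part2:
  assumes "ps \<noteq> []" "\<forall>p\<in>set ps. snd p \<ge> 1"
  shows "\<exists>t. \<not> posR ps differentiable (at t) \<and> (\<forall>s > t. posR ps differentiable (at s)) \<and>
                 posR ps t = real (Nr ps)"
proof -
  define t0 where "t0 = real (Nr ps) - real (sumr ps)"
  have R: "\<And>y. y \<ge> t0 \<Longrightarrow> posR ps y = y + real (sumr ps)" using posR_P1 unfolding t0_def by auto
  obtain d where d: "d > 0" "\<forall>x. t0 - d < x \<and> x \<le> t0 \<longrightarrow> posR ps x \<le> real (Nr ps) - 2 * (t0 - x)"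
    using posR_P2[OF assms] unfolding t0_def by blast
  have v: "posR ps t0 = real (Nr ps)" using R[of t0] unfolding t0_def by simp
  show ?thesis
  proof (intro exI conjI allI impI)
    show "\<not> posR ps differentiable (at t0)"
      by (rule kink_nondiff[OF R d(1)]) (use d(2) v in auto)
    show "posR ps differentiable (at s)" if "s > t0" for s using trans_diff[OF R that] by simp
  qed (rule v)
qed

definition tm :: "(nat \<times> nat) list \<Rightarrow> nat \<Rightarrow> nat" where
  "tm ps k = fst (ps ! k) + sum_list (map snd (drop k ps)) + 1"

lemma tm_le: "k < length ps \<Longrightarrow> tm ps k \<le> Nr ps"
proof (induct ps arbitrary: k)
  case Nil then show ?case by simp
next
  case (Cons p ps)
  show ?case
  proof (cases k)
    case 0 then show ?thesis by (simp add: tm_def sumr_eq)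
  next
    case (Suc k')
    then have "tm (p # ps) k = tm ps k'" by (simp add: tm_def)
    moreover have "tm ps k' \<le> Nr ps" using Cons Suc by simp
    ultimately show ?thesis by simp
  qed
qed

lemma tm_ex: "ps \<noteq> [] \<Longrightarrow> \<exists>k<length ps. tm ps k = Nr ps"
proof (induct ps)
  case Nil then show ?case by simp
next
  case (Cons p ps)
  show ?case
  proof (cases "ps = [] \<or> Nr ps \<le> fst p + snd p + sumr ps + 1")
    case True
    then have "tm (p # ps) 0 = Nr (p # ps)" by (auto simp: tm_def sumr_eq)
    then show ?thesis by force
  next
    case False
    then obtain k where k: "k < length ps" "tm ps k = Nr ps" using Cons by auto
    have "tm (p # ps) (Suc k) = Nr (p # ps)" using k False by (simp add: tm_def)
    then show ?thesis using k by force
  qed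
qed

lemma Nval_Nr: "Nval ps = Nr ps" if "ps \<noteq> []"
proof -
  have e: "Nval ps = Max (tm ps ` {..<length ps})" unfolding Nval_def tm_def by simp
  show ?thesis unfolding e
  proof (rule Max_eqI)
    show "Nr ps \<in> tm ps ` {..<length ps}" using tm_ex[OF that] by force
  qed (use tm_le in auto)
qed

lemma pos_nf_bounds:
  assumes "pos_nf ps"
  shows "real (Dval ps) / 2 \<le> real (Nval ps) \<and> Nval ps \<le> Dval ps + 1"
proof -
  have ne: "ps \<noteq> []" and so: "sorted_wrt (<) (map fst ps)" and r: "\<forall>p\<in>set ps. snd p \<ge> 1"
    using assms by (auto simp: pos_nf_def)
  define n where "n = length ps - 1"
  have n: "n < length ps" "last ps = ps ! n" using ne by (auto simp: n_def last_conv_nth)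
  have fl: "fst (ps ! k) \<le> fst (last ps)" if "k < length ps" for k
  proof (cases "k = n")
    case True then show ?thesis using n by simp
  next
    case False
    then have "k < n" using that n_def by auto
    then show ?thesis using so n sorted_wrt_nth_less[OF so, of k n] by auto
  qed
  have "tm ps k \<le> Dval ps + 1" if "k < length ps" for k
  proof -
    have "sum_list (map snd (drop k ps)) \<le> sum_list (map snd ps)"
    proof -
      have "sum_list (map snd ps) = sum_list (map snd (take k ps)) + sum_list (map snd (drop k ps))"
        by (metis append_take_drop_id map_append sum_list_append)
      then show ?thesis by simp
    qed
    then show ?thesis using fl[OF that] by (simp add: tm_def Dval_def)
  qed
  then have up: "Nr ps \<le> Dval ps + 1" using tm_ex[OF ne] by force
  have a: "sum_list (map snd ps) + 1 \<le> Nr ps" using tm_le[of 0 ps] ne by (simp add: tm_def)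
  have "snd (ps ! n) \<ge> 1" using r n by auto
  moreover have "drop n ps = [ps ! n]" using n ne unfolding n_def
    by (metis Cons_nth_drop_Suc One_nat_def Suc_pred append_eq_conv_conj append_take_drop_id drop_all le_refl length_greater_0_conv)
  ultimately have b: "fst (last ps) + 2 \<le> Nr ps" using tm_le[OF n(1)] n by (simp add: tm_def)
  have "Dval ps + 2 \<le> 2 * Nr ps" using a b by (simp add: Dval_def)
  then show ?thesis using up Nval_Nr[OF ne] by simp
qed

lemma fRinv_fR: "fRinv i (fR i t) = t"
  by (cases "t \<le> real i"; cases "t \<le> real i + 1") (simp_all add: fR_def fRinv_def)

lemma fR_conj: "j \<ge> 1 \<Longrightarrow> fR (Suc j) t = fR 0 (fR j (fRinv 0 t))"
  by (cases "t \<le> 0"; cases "t \<le> 2"; cases "t \<le> real j + 1"; cases "t \<le> real j + 2") (simp_all add: fR_def fRinv_def)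

lemma fR_fRinv: "fR i (fRinv i t) = t"
proof -
  have "2 * ((t + real i) / 2) = t + real i" by simp
  then show ?thesis unfolding fR_def fRinv_def by (simp split: if_split del: times_divide_eq_right)
qed

lemma fRinvp_fRp: "(fRinv i ^^ n) ((fR i ^^ n) x) = x"
proof (induct n arbitrary: x)
  case 0 then show ?case by simp
next
  case (Suc n)
  have a: "(fR i ^^ Suc n) x = fR i ((fR i ^^ n) x)" by simp
  have b: "(fRinv i ^^ Suc n) y = (fRinv i ^^ n) (fRinv i y)" for y
    by (simp add: funpow_Suc_right del: funpow.simps)
  show ?case unfolding a b using Suc by (simp add: fRinv_fR)
qed

lemma fRp_fRinvp: "(fR i ^^ n) ((fRinv i ^^ n) x) = x"
proof (induct n arbitrary: x)
  case 0 then show ?case by simp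
next
  case (Suc n)
  have a: "(fRinv i ^^ Suc n) x = fRinv i ((fRinv i ^^ n) x)" by simp
  have b: "(fR i ^^ Suc n) y = (fR i ^^ n) (fR i y)" for y
    by (simp add: funpow_Suc_right del: funpow.simps)
  show ?case unfolding a b using Suc by (simp add: fR_fRinv)
qed

lemma fR_word: "i \<ge> 1 \<Longrightarrow> fR i t = (fR 0 ^^ (i - 1)) (fR 1 ((fRinv 0 ^^ (i - 1)) t))"
proof (induct i arbitrary: t)
  case 0 then show ?case by simp
next
  case (Suc j)
  show ?case
  proof (cases "j = 0")
    case True then show ?thesis by simp
  next
    case False
    then have "fR (Suc j) t = fR 0 (fR j (fRinv 0 t))" using fR_conj by simp
    also have "\<dots> = fR 0 ((fR 0 ^^ (j - 1)) (fR 1 ((fRinv 0 ^^ (j - 1)) (fRinv 0 t))))"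
      using Suc False by simp
    also have "\<dots> = (fR 0 ^^ (Suc j - 1)) (fR 1 ((fRinv 0 ^^ (Suc j - 1)) t))"
    proof -
      obtain j' where j: "j = Suc j'" using False by (cases j) auto
      have a: "(fR 0 ^^ Suc j') y = fR 0 ((fR 0 ^^ j') y)" for y by simp
      have b: "(fRinv 0 ^^ Suc j') y = (fRinv 0 ^^ j') (fRinv 0 y)" for y
        by (simp add: funpow_Suc_right del: funpow.simps)
      show ?thesis unfolding j using a b by simp
    qed
    finally show ?thesis .
  qed
qed

lemma fRp_word: "i \<ge> 1 \<Longrightarrow> (fR i ^^ r) t = (fR 0 ^^ (i - 1)) ((fR 1 ^^ r) ((fRinv 0 ^^ (i - 1)) t))"
proof (induct r)
  case 0 then show ?case by (simp add: fRp_fRinvp)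
next
  case (Suc r)
  have "(fR i ^^ Suc r) t = fR i ((fR i ^^ r) t)" by simp
  also have "\<dots> = (fR 0 ^^ (i - 1)) (fR 1 ((fRinv 0 ^^ (i - 1)) ((fR 0 ^^ (i - 1)) ((fR 1 ^^ r) ((fRinv 0 ^^ (i - 1)) t)))))"
    unfolding Suc.hyps[OF Suc.prems] by (rule fR_word[OF Suc.prems])
  also have "\<dots> = (fR 0 ^^ (i - 1)) ((fR 1 ^^ Suc r) ((fRinv 0 ^^ (i - 1)) t))"
    by (simp add: fRinvp_fRp)
  finally show ?case .
qed

fun wd :: "nat \<Rightarrow> (nat \<times> nat) list \<Rightarrow> (nat \<times> bool) list" where
  "wd c [] = replicate c (0, True)"
| "wd c ((i, r) # ps) = (if i = 0 then wd (c + r) ps else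
     replicate (i - 1 - c) (0, False) @ replicate (c - (i - 1)) (0, True) @ replicate r (1, True) @ wd (i - 1) ps)"

lemma wordR_append: "wordR (xs @ ys) t = wordR ys (wordR xs t)"
  by (induct xs arbitrary: t) auto

lemma wordR_rep: "wordR (replicate n g) t = (genR g ^^ n) t"
  by (induct n arbitrary: t) (auto simp: funpow_Suc_right simp del: funpow.simps)

lemma wd_correct: "wordR (wd c ps) t = posR ps ((fR 0 ^^ c) t)"
proof (induct c ps arbitrary: t rule: wd.induct)
  case (1 c) then show ?case by (simp add: wordR_rep)
next
  case (2 c i r ps)
  show ?case
  proof (cases "i = 0")
    case True
    have "(fR 0 ^^ c) ((fR 0 ^^ r) t) = (fR 0 ^^ (c + r)) t" by (simp add: funpow_add)
    also have "\<dots> = (fR 0 ^^ (r + c)) t" by (simp add: add.commute)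
    also have "\<dots> = (fR 0 ^^ r) ((fR 0 ^^ c) t)" by (simp add: funpow_add)
    finally have "(fR 0 ^^ c) ((fR 0 ^^ r) t) = (fR 0 ^^ r) ((fR 0 ^^ c) t)" .
    then show ?thesis using 2(1)[OF True, of t] True by (simp add: funpow_add)
  next
    case False
    define e where "e = i - 1"
    have key: "(fR 0 ^^ (c - e)) ((fRinv 0 ^^ (e - c)) t) = (fRinv 0 ^^ e) ((fR 0 ^^ c) t)"
    proof (cases "e \<ge> c")
      case True
      then have "(fRinv 0 ^^ e) ((fR 0 ^^ c) t) = (fRinv 0 ^^ (e - c)) ((fRinv 0 ^^ c) ((fR 0 ^^ c) t))"
        by (metis funpow_add le_add_diff_inverse2 o_apply)
      then show ?thesis using True by (simp add: fRinvp_fRp)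
    next
      case False
      then have "(fRinv 0 ^^ e) ((fR 0 ^^ c) t) = (fRinv 0 ^^ e) ((fR 0 ^^ e) ((fR 0 ^^ (c - e)) t))"
        by (metis funpow_add le_add_diff_inverse nat_le_linear o_apply)
      then show ?thesis using False by (simp add: fRinvp_fRp)
    qed
    have "wordR (wd c ((i, r) # ps)) t = posR ps ((fR 0 ^^ e) ((fR 1 ^^ r) ((fR 0 ^^ (c - e)) ((fRinv 0 ^^ (e - c)) t))))"
      using 2(2)[OF False] False by (simp add: wordR_append wordR_rep e_def)
    also have "\<dots> = posR ((i, r) # ps) ((fR 0 ^^ c) t)"
      using key fRp_word[of i r] False by (simp add: e_def)
    finally show ?thesis .
  qed
qed

lemma wd_gens: "\<forall>w\<in>set (wd c ps). fst w \<le> 1"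
  by (induct c ps rule: wd.induct) auto

fun mx :: "(nat \<times> nat) list \<Rightarrow> nat" where
  "mx [] = 0"
| "mx (p # ps) = max (fst p) (mx ps)"

lemma wd_lenA: "(\<forall>p\<in>set ps. c < fst p) \<Longrightarrow> sorted_wrt (<) (map fst ps) \<Longrightarrow>
   length (wd c ps) + c \<le> 2 * max c (mx ps) + sumr ps"
proof (induct ps arbitrary: c)
  case Nil then show ?case by simp
next
  case (Cons p ps)
  obtain i r where p: "p = (i, r)" by (cases p)
  have i: "c < i" using Cons(2) p by auto
  then obtain e where e: "i = Suc e" by (cases i) auto
  have h: "\<forall>q\<in>set ps. e < fst q" using Cons(3) p e by auto
  have IH: "length (wd e ps) + e \<le> 2 * max e (mx ps) + sumr ps"
    using Cons(1)[OF h] Cons(3) by auto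
  have ce: "c \<le> e" using i e by simp
  have len: "length (wd c (p # ps)) = (e - c) + r + length (wd e ps)" using ce by (simp add: p e)
  have m: "max e (mx ps) \<le> max c (mx (p # ps))" by (auto simp: p e)
  have s: "sumr (p # ps) = r + sumr ps" by (simp add: p)
  have "e - c + c = e" using ce by simp
  then show ?case unfolding len s using IH m by linarith
qed

lemma wd_lenB: "(\<forall>p\<in>set ps. 0 < fst p) \<Longrightarrow> sorted_wrt (<) (map fst ps) \<Longrightarrow>
   length (wd c ps) \<le> 2 * c + 2 * mx ps + sumr ps"
proof (cases ps)
  case Nil then show ?thesis by simp
next
  case (Cons p ps')
  assume a: "\<forall>p\<in>set ps. 0 < fst p" "sorted_wrt (<) (map fst ps)"
  obtain i r where p: "p = (i, r)" by (cases p)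
  have i: "0 < i" using a Cons p by auto
  then obtain e where e: "i = Suc e" by (cases i) auto
  have h: "\<forall>q\<in>set ps'. e < fst q" using a Cons p e by auto
  have IH: "length (wd e ps') + e \<le> 2 * max e (mx ps') + sumr ps'"
    using wd_lenA[OF h] a Cons by auto
  have len: "length (wd c ps) = (e - c) + (c - e) + r + length (wd e ps')" by (simp add: p Cons e)
  have m: "max e (mx ps') \<le> mx ps" "e \<le> mx ps" by (auto simp: p Cons e)
  have s: "sumr ps = r + sumr ps'" by (simp add: p Cons)
  have "(e - c) + (c - e) \<le> c + e" by arith
  then show ?thesis unfolding len s using IH m by linarith
qed

lemma mx_le: "mx ps \<le> Nr ps" and sumr_le: "sumr ps \<le> Nr ps"
  by (induct ps) auto

lemma wd_len: assumes "pos_nf ps" shows "length (wd 0 ps) \<le> 4 * Nr ps"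
proof -
  obtain p ps' where ps: "ps = p # ps'" using assms by (cases ps) (auto simp: pos_nf_def)
  obtain i r where p: "p = (i, r)" by (cases p)
  have so: "sorted_wrt (<) (map fst ps)" using assms by (simp add: pos_nf_def)
  have "length (wd 0 ps) \<le> 2 * sumr ps + 2 * mx ps"
  proof (cases "i = 0")
    case True
    have "length (wd r ps') \<le> 2 * r + 2 * mx ps' + sumr ps'"
      using wd_lenB[of ps' r] so True by (auto simp: ps p)
    then show ?thesis using True by (simp add: ps p)
  next
    case False
    have "\<forall>q\<in>set ps. 0 < fst q" using so False by (auto simp: ps p)
    then show ?thesis using wd_lenA[of ps 0] so by auto
  qed
  then show ?thesis using mx_le[of ps] sumr_le[of ps] by simp
qed

lemma word_trans: "\<forall>w\<in>set ws. fst w \<le> 1 \<Longrightarrow>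
  \<exists>k::int. \<bar>k\<bar> \<le> int (length ws) \<and> (\<forall>t \<ge> 4 + real (length ws). wordR ws t = t + real_of_int k)"
proof (induct ws)
  case Nil then show ?case by (intro exI[of _ 0]) simp
next
  case (Cons g ws)
  obtain k where k: "\<bar>k\<bar> \<le> int (length ws)" "\<forall>t \<ge> 4 + real (length ws). wordR ws t = t + real_of_int k"
    using Cons by auto
  obtain j b where g: "g = (j, b)" by (cases g)
  have j: "j \<le> 1" using Cons(2) g by auto
  define e :: int where "e = (if b then 1 else -1)"
  have ge: "genR g t = t + real_of_int e" if "t \<ge> 4" for t
  proof -
    have "real j \<le> 1" using j by simp
    then have "\<not> t \<le> real j" "\<not> t \<le> real j + 1" "\<not> t \<le> real j + 2" using that by linarith+
    then show ?thesis by (cases b) (simp_all add: g e_def fR_def fRinv_def)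
  qed
  show ?case
  proof (intro exI[of _ "k + e"] conjI allI impI)
    have e1: "e = 1 \<or> e = -1" by (simp add: e_def)
    have "\<bar>k + e\<bar> \<le> \<bar>k\<bar> + \<bar>e\<bar>" by (rule abs_triangle_ineq)
    moreover have "\<bar>e\<bar> = 1" using e1 by auto
    moreover have "int (length (g # ws)) = int (length ws) + 1" by simp
    ultimately show "\<bar>k + e\<bar> \<le> int (length (g # ws))" using k(1) by linarith
    fix t assume t: "4 + real (length (g # ws)) \<le> t"
    have lw: "real (length (g # ws)) = real (length ws) + 1" by simp
    have t4: "t \<ge> 4" using t lw of_nat_0_le_iff[of "length ws"] by linarith
    have "genR g t = t + e" using ge[OF t4] .
    moreover have "real_of_int e \<ge> -1" using e1 by auto
    then have "4 + real (length ws) \<le> t + e" using t lw by linarith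
    ultimately show "wordR (g # ws) t = t + real_of_int (k + e)" using k(2) by simp
  qed
qed

lemma N_le_word:
  assumes ne: "ps \<noteq> []" and r: "\<forall>p\<in>set ps. snd p \<ge> 1"
    and gens: "\<forall>w\<in>set ws. fst w \<le> 1" and eq: "wordR ws = posR ps"
  shows "real (Nr ps) \<le> 4 + 2 * real (length ws)"
proof -
  define t0 where "t0 = real (Nr ps) - real (sumr ps)"
  define c where "c = 4 + real (length ws)"
  obtain k where k: "\<bar>k\<bar> \<le> int (length ws)" "\<forall>t \<ge> c. posR ps t = t + real_of_int k"
    using word_trans[OF gens] eq unfolding c_def by metis
  have R: "\<And>y. y \<ge> t0 \<Longrightarrow> posR ps y = y + real (sumr ps)" using posR_P1 unfolding t0_def by auto
  obtain d where d: "d > 0" "\<forall>x. t0 - d < x \<and> x \<le> t0 \<longrightarrow> posR ps x \<le> real (Nr ps) - 2 * (t0 - x)"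
    using posR_P2[OF ne r] unfolding t0_def by blast
  have t0c: "t0 \<le> c"
  proof (rule ccontr)
    assume "\<not> t0 \<le> c"
    define x where "x = max c (t0 - d / 2)"
    have x: "t0 - d < x" "x < t0" "c \<le> x" using d(1) \<open>\<not> t0 \<le> c\<close> unfolding x_def by auto
    have "posR ps t0 = t0 + real_of_int k" using k(2) x by auto
    moreover have "posR ps t0 = t0 + real (sumr ps)" using R by simp
    ultimately have ks: "real_of_int k = real (sumr ps)" by simp
    have "posR ps x = x + real (sumr ps)" using k(2) x ks by auto
    moreover have "posR ps x \<le> real (Nr ps) - 2 * (t0 - x)" using d(2) x by auto
    ultimately show False using x unfolding t0_def by simp
  qed
  have "posR ps c = c + real_of_int k" using k(2) by simp
  moreover have "posR ps c = c + real (sumr ps)" using R t0c by simp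
  ultimately have "real (sumr ps) \<le> real (length ws)" using k(1) by linarith
  then show ?thesis using t0c unfolding t0_def c_def by simp
qed

lemma part4: "\<exists>C K::real. C > 0 \<and>
            (\<forall>ps. pos_nf ps \<longrightarrow>
               real (Nval ps) \<le> C * real (word_length (posR ps)) + K \<and>
               real (word_length (posR ps)) \<le> C * real (Nval ps) + K)"
proof (intro exI[of _ 4] conjI allI impI)
  fix ps assume p: "pos_nf ps"
  have ne: "ps \<noteq> []" and r: "\<forall>p\<in>set ps. snd p \<ge> 1" using p by (auto simp: pos_nf_def)
  have wc: "wordR (wd 0 ps) = posR ps" using wd_correct[of 0 ps] by (auto simp: fun_eq_iff)
  have ex: "\<exists>ws. length ws = length (wd 0 ps) \<and> (\<forall>w\<in>set ws. fst w \<le> 1) \<and> wordR ws = posR ps"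
    using wc wd_gens by blast
  have wl1: "word_length (posR ps) \<le> length (wd 0 ps)"
    unfolding word_length_def by (rule Least_le) (rule ex)
  have "\<exists>n ws. length ws = n \<and> (\<forall>w\<in>set ws. fst w \<le> 1) \<and> wordR ws = posR ps" using ex by blast
  then have "\<exists>ws. length ws = word_length (posR ps) \<and> (\<forall>w\<in>set ws. fst w \<le> 1) \<and> wordR ws = posR ps"
    unfolding word_length_def by (rule LeastI_ex)
  then obtain ws where ws: "length ws = word_length (posR ps)" "\<forall>w\<in>set ws. fst w \<le> 1" "wordR ws = posR ps"
    by blast
  have N: "Nval ps = Nr ps" using Nval_Nr[OF ne] .
  show "real (Nval ps) \<le> 4 * real (word_length (posR ps)) + 4"
    using N_le_word[OF ne r ws(2,3)] ws(1) N by simp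
  show "real (word_length (posR ps)) \<le> 4 * real (Nval ps) + 4"
    using wl1 wd_len[OF p] N by simp
qed simp

definition aff :: "(real \<Rightarrow> real) \<Rightarrow> real \<Rightarrow> real \<Rightarrow> real \<Rightarrow> real \<Rightarrow> bool" where
  "aff g a b c d \<longleftrightarrow> (\<forall>t. a \<le> t \<and> t \<le> b \<longrightarrow> g t = c + (d - c) / (b - a) * (t - a))"

definition rep :: "(real \<Rightarrow> real) \<Rightarrow> (real \<times> real) list \<Rightarrow> (real \<times> real) list \<Rightarrow> bool" where
  "rep g A B \<longleftrightarrow> length A = length B \<and> (\<forall>k<length A. fst (A!k) < snd (A!k) \<and> fst (B!k) < snd (B!k) \<and>
      aff g (fst (A!k)) (snd (A!k)) (fst (B!k)) (snd (B!k)))"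

lemma length_ivs[simp]: "length (ivs U a b) = nleaves U"
  by (induct U arbitrary: a b) auto

lemma rep_append: "rep g A1 B1 \<Longrightarrow> rep g A2 B2 \<Longrightarrow> rep g (A1 @ A2) (B1 @ B2)"
  unfolding rep_def by (auto simp: nth_append)

lemma aff_intro: "(\<And>t. a \<le> t \<Longrightarrow> t \<le> b \<Longrightarrow> g t = c + s * (t - a)) \<Longrightarrow> (d - c) / (b - a) = s \<Longrightarrow> aff g a b c d"
  unfolding aff_def by auto

lemma aff_comp:
  assumes ab: "a < b" and cd: "c < d" and g1: "aff g1 a b c d" and g2: "aff g2 c d e f"
  shows "aff (g2 \<circ> g1) a b e f"
  unfolding aff_def
proof (intro allI impI)
  fix t assume t: "a \<le> t \<and> t \<le> b"
  define u where "u = (t - a) / (b - a)"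
  have u: "0 \<le> u" "u \<le> 1" using t ab unfolding u_def by (auto simp: divide_simps)
  have g1t: "g1 t = c + (d - c) * u" using g1 t unfolding aff_def u_def by auto
  have "(d - c) * u \<le> (d - c) * 1" using mult_left_mono[of u 1 "d - c"] u cd by simp
  moreover have "0 \<le> (d - c) * u" using u cd by simp
  ultimately have "c \<le> g1 t" "g1 t \<le> d" unfolding g1t by auto
  then have "g2 (g1 t) = e + (f - e) / (d - c) * (g1 t - c)" using g2 unfolding aff_def by auto
  also have "\<dots> = e + (f - e) * u" unfolding g1t using cd by simp
  finally show "(g2 \<circ> g1) t = e + (f - e) / (b - a) * (t - a)" unfolding u_def by simp
qed

lemma rep_comp: "rep g1 A B \<Longrightarrow> rep g2 B C \<Longrightarrow> rep (g2 \<circ> g1) A C"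
  unfolding rep_def using aff_comp by metis

lemma aff_left: "a < b \<Longrightarrow> aff g a b c d \<Longrightarrow> aff g a ((a + b) / 2) c ((c + d) / 2)"
  unfolding aff_def
proof (intro allI impI)
  fix t assume ab: "a < b" and A: "\<forall>t. a \<le> t \<and> t \<le> b \<longrightarrow> g t = c + (d - c) / (b - a) * (t - a)"
    and t: "a \<le> t \<and> t \<le> (a + b) / 2"
  have "((c + d) / 2 - c) / ((a + b) / 2 - a) = (d - c) / (b - a)" by (simp add: divide_simps) (simp add: algebra_simps)
  then show "g t = c + ((c + d) / 2 - c) / ((a + b) / 2 - a) * (t - a)" using A t ab by auto
qed

lemma aff_right: "a < b \<Longrightarrow> aff g a b c d \<Longrightarrow> aff g ((a + b) / 2) b ((c + d) / 2) d"
  unfolding aff_def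
proof (intro allI impI)
  fix t assume ab: "a < b" and A: "\<forall>t. a \<le> t \<and> t \<le> b \<longrightarrow> g t = c + (d - c) / (b - a) * (t - a)"
    and t: "(a + b) / 2 \<le> t \<and> t \<le> b"
  have e: "(d - (c + d) / 2) / (b - (a + b) / 2) = (d - c) / (b - a)" by (simp add: divide_simps) (simp add: algebra_simps)
  define s where "s = (d - c) / (b - a)"
  have h: "s * ((a + b) / 2 - a) = (d - c) / 2" using ab unfolding s_def by (simp add: divide_simps)
  have h2: "s * (t - a) = s * (t - m) + s * (m - a)" for m by (simp add: algebra_simps)
  have "c + (d - c) / (b - a) * (t - a) = (c + d) / 2 + (d - c) / (b - a) * (t - (a + b) / 2)"
  proof -
    have lin: "\<And>X Y Z::real. Z = (d - c) / 2 \<Longrightarrow> X = Y + Z \<Longrightarrow> c + X = (c + d) / 2 + Y" by (simp add: field_simps)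
    show ?thesis unfolding s_def[symmetric] by (rule lin[OF h h2[of "(a + b) / 2"]])
  qed
  then show "g t = (c + d) / 2 + (d - (c + d) / 2) / (b - (a + b) / 2) * (t - (a + b) / 2)"
    using A t ab e by auto
qed

lemma aff_tree: "a < b \<Longrightarrow> c < d \<Longrightarrow> aff g a b c d \<Longrightarrow> rep g (ivs U a b) (ivs U c d)"
proof (induct U arbitrary: a b c d)
  case Leaf then show ?case by (simp add: rep_def)
next
  case (Node l r)
  have "rep g (ivs l a ((a + b) / 2)) (ivs l c ((c + d) / 2))"
    using Node(1)[OF _ _ aff_left[OF Node(3,5)]] Node(3,4) by simp
  moreover have "rep g (ivs r ((a + b) / 2) b) (ivs r ((c + d) / 2) d)"
    using Node(2)[OF _ _ aff_right[OF Node(3,5)]] Node(3,4) by simp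
  ultimately show ?case by (simp add: rep_append)
qed

lemma aff_idI: "(\<And>t. a \<le> t \<Longrightarrow> t \<le> b \<Longrightarrow> g t = t) \<Longrightarrow> a < b \<Longrightarrow> aff g a b a b"
  unfolding aff_def by auto

fun spine :: "tree list \<Rightarrow> tree" where
  "spine [] = Leaf"
| "spine (x # xs) = Node x (spine xs)"

definition pp :: "nat \<Rightarrow> real" where "pp j = 1 - 1 / 2 ^ j"

lemma pp_mid[simp]: "(pp j + 1) / 2 = pp (Suc j)"
  unfolding pp_def by (simp add: divide_simps)

lemma pp0[simp]: "pp 0 = 0" unfolding pp_def by simp

lemma pp_lt1: "pp j < 1" unfolding pp_def by simp

lemma pp_mono: "j \<le> i \<Longrightarrow> pp j \<le> pp i"
proof -
  assume ji: "j \<le> i"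
  have "(2::real) ^ j \<le> 2 ^ i" by (rule power_increasing[OF ji]) simp
  then have "1 / (2::real) ^ i \<le> 1 / 2 ^ j" by (rule divide_left_mono) auto
  then show ?thesis unfolding pp_def by simp
qed

lemma pp_Suc: "pp (Suc j) = pp j + 1 / 2 ^ Suc j"
  unfolding pp_def by (simp add: divide_simps)

lemma gI_id: "t \<le> pp i \<Longrightarrow> gI i t = t"
  unfolding gI_def pp_def Let_def by simp

lemma gI_gt: "pp i < t \<Longrightarrow> gI i t = pp i + g0 (2 ^ i * (t - pp i)) / 2 ^ i"
  unfolding gI_def pp_def Let_def by simp

lemma pp_facts:
  shows "(2::real) ^ i > 0" "2 ^ i * (1 / 2 ^ i) = (1::real)" "pp (Suc i) = pp i + (1 / 2 ^ i) / 2" "pp (Suc (Suc i)) = pp i + 3 * (1 / 2 ^ i) / 4"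
    "(pp i + pp (Suc i)) / 2 = pp i + (1 / 2 ^ i) / 4" "1 = pp i + 1 / 2 ^ i"
  unfolding pp_def by (simp_all add: divide_simps)

lemma scale_le: "(c::real) > 0 \<Longrightarrow> c * u = 1 \<Longrightarrow> t - a \<le> k * u \<Longrightarrow> c * (t - a) \<le> k"
  by (metis mult.left_commute mult.right_neutral mult_left_mono order_less_imp_le)

lemma scale_ge: "(c::real) > 0 \<Longrightarrow> c * u = 1 \<Longrightarrow> k * u \<le> t - a \<Longrightarrow> k \<le> c * (t - a)"
  by (metis mult.left_commute mult.right_neutral mult_left_mono order_less_imp_le)

lemma gI_piece1: "aff (gI i) (pp i) ((pp i + pp (Suc i)) / 2) (pp i) (pp (Suc i))"
proof (rule aff_intro[where s=2])
  define c where "c = (2::real) ^ i"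
  define u where "u = 1 / (2::real) ^ i"
  define a where "a = pp i"
  note f = pp_facts[of i, folded u_def, folded c_def a_def]
  fix t assume t: "pp i \<le> t" "t \<le> (pp i + pp (Suc i)) / 2"
  show "gI i t = pp i + 2 * (t - pp i)"
  proof (cases "t \<le> pp i")
    case True then show ?thesis using gI_id t by simp
  next
    case False
    have "t - a \<le> (1/4) * u" using t(2) f(5) unfolding a_def by simp
    then have x: "c * (t - a) \<le> 1 / 4" using scale_le[of c u t a "1/4"] f(1,2) by simp
    have "gI i t = a + g0 (c * (t - a)) / c" using gI_gt False unfolding a_def c_def by simp
    also have "\<dots> = a + 2 * (t - a)" using x f(1) unfolding g0_def by simp
    finally show ?thesis unfolding a_def .
  qed
next
  define u where "u = 1 / (2::real) ^ i"
  have u: "u > 0" unfolding u_def by simp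
  note f = pp_facts[of i, folded u_def]
  show "(pp (Suc i) - pp i) / ((pp i + pp (Suc i)) / 2 - pp i) = 2"
    unfolding f(3,5) using u by (simp add: divide_simps)
qed

lemma gI_piece2: "aff (gI i) ((pp i + pp (Suc i)) / 2) (pp (Suc i)) (pp (Suc i)) (pp (Suc (Suc i)))"
proof (rule aff_intro[where s=1])
  define c where "c = (2::real) ^ i"
  define u where "u = 1 / (2::real) ^ i"
  define a where "a = pp i"
  have u: "u > 0" unfolding u_def by simp
  note f = pp_facts[of i, folded u_def, folded c_def a_def]
  fix t assume t: "(pp i + pp (Suc i)) / 2 \<le> t" "t \<le> pp (Suc i)"
  have "(1/4) * u \<le> t - a" using t(1) f(5) unfolding a_def by simp
  then have x1: "1 / 4 \<le> c * (t - a)" using scale_ge[of c u "1/4" t a] f(1,2) by simp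
  have "t - a \<le> (1/2) * u" using t(2) f(3) unfolding a_def by simp
  then have x2: "c * (t - a) \<le> 1 / 2" using scale_le[of c u t a "1/2"] f(1,2) by simp
  have "t > a" using t f u unfolding a_def by simp
  then have "gI i t = a + g0 (c * (t - a)) / c" using gI_gt unfolding a_def c_def by simp
  also have "\<dots> = a + (c * (t - a) + 1 / 4) / c"
    using x1 x2 unfolding g0_def by auto
  also have "\<dots> = t + (1 / 4) * (1 / c)" using f(1) by (simp add: divide_simps algebra_simps)
  also have "1 / c = u" unfolding u_def c_def by simp
  also have "t + 1 / 4 * u = pp (Suc i) + 1 * (t - (pp i + pp (Suc i)) / 2)" unfolding a_def[symmetric] f(5) f(3) by (simp add: field_simps)
  finally show "gI i t = pp (Suc i) + 1 * (t - (pp i + pp (Suc i)) / 2)" .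
next
  define u where "u = 1 / (2::real) ^ i"
  have u: "u > 0" unfolding u_def by simp
  note f = pp_facts[of i, folded u_def]
  show "(pp (Suc (Suc i)) - pp (Suc i)) / (pp (Suc i) - (pp i + pp (Suc i)) / 2) = 1"
    unfolding f(3,4,5) using u by (simp add: divide_simps)
qed

lemma gI_piece3: "aff (gI i) (pp (Suc i)) 1 (pp (Suc (Suc i))) 1"
proof (rule aff_intro[where s="1/2"])
  define c where "c = (2::real) ^ i"
  define u where "u = 1 / (2::real) ^ i"
  define a where "a = pp i"
  have u: "u > 0" unfolding u_def by simp
  note f = pp_facts[of i, folded u_def, folded c_def a_def]
  fix t assume t: "pp (Suc i) \<le> t" "t \<le> 1"
  have "(1/2) * u \<le> t - a" using t(1) f(3) unfolding a_def by simp
  then have x1: "1 / 2 \<le> c * (t - a)" using scale_ge[of c u "1/2" t a] f(1,2) by simp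
  have "t > a" using t f u unfolding a_def by simp
  then have "gI i t = a + g0 (c * (t - a)) / c" using gI_gt unfolding a_def c_def by simp
  also have "\<dots> = a + (c * (t - a) / 2 + 1 / 2) / c"
    using x1 unfolding g0_def by auto
  also have "\<dots> = a + (t - a) / 2 + (1 / 2) * (1 / c)" using f(1) by (simp add: divide_simps algebra_simps)
  also have "1 / c = u" unfolding u_def c_def by simp
  also have "a + (t - a) / 2 + 1 / 2 * u = pp (Suc (Suc i)) + 1 / 2 * (t - pp (Suc i))"
    unfolding a_def[symmetric] f(3) f(4) by (simp add: field_simps)
  finally show "gI i t = pp (Suc (Suc i)) + 1 / 2 * (t - pp (Suc i))" .
next
  define u where "u = 1 / (2::real) ^ i"
  have u: "u > 0" unfolding u_def by simp
  note f = pp_facts[of i, folded u_def]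
  have "1 - pp (Suc (Suc i)) = u / 4" "1 - pp (Suc i) = u / 2"
    using f by simp_all
  then show "(1 - pp (Suc (Suc i))) / (1 - pp (Suc i)) = 1 / 2"
    using u by (simp add: divide_simps)
qed

lemma pp_lt_Suc: "pp j < pp (Suc j)"
  unfolding pp_def by (simp add: divide_simps)

lemma pp_lt_mid: "pp j < (pp j + pp (Suc j)) / 2" "(pp j + pp (Suc j)) / 2 < pp (Suc j)"
  using pp_lt_Suc[of j] by simp_all

lemma ivs_spine_Cons: "ivs (spine (x # xs)) (pp j) 1 = ivs x (pp j) (pp (Suc j)) @ ivs (spine xs) (pp (Suc j)) 1"
  by simp

lemma SS_gen: "j + length P = i \<Longrightarrow>
  rep (gI i) (ivs (spine (P @ Node x y # R)) (pp j) 1) (ivs (spine (P @ x # y # R)) (pp j) 1)"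
proof (induct P arbitrary: j)
  case Nil
  then have j: "j = i" by simp
  have e1: "ivs (spine (Node x y # R)) (pp i) 1 =
     ivs x (pp i) ((pp i + pp (Suc i)) / 2) @ ivs y ((pp i + pp (Suc i)) / 2) (pp (Suc i)) @ ivs (spine R) (pp (Suc i)) 1"
    by simp
  have e2: "ivs (spine (x # y # R)) (pp i) 1 =
     ivs x (pp i) (pp (Suc i)) @ ivs y (pp (Suc i)) (pp (Suc (Suc i))) @ ivs (spine R) (pp (Suc (Suc i))) 1"
    by simp
  have r1: "rep (gI i) (ivs x (pp i) ((pp i + pp (Suc i)) / 2)) (ivs x (pp i) (pp (Suc i)))"
    by (rule aff_tree[OF pp_lt_mid(1) pp_lt_Suc gI_piece1])
  have r2: "rep (gI i) (ivs y ((pp i + pp (Suc i)) / 2) (pp (Suc i))) (ivs y (pp (Suc i)) (pp (Suc (Suc i))))"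
    by (rule aff_tree[OF pp_lt_mid(2) pp_lt_Suc gI_piece2])
  have r3: "rep (gI i) (ivs (spine R) (pp (Suc i)) 1) (ivs (spine R) (pp (Suc (Suc i))) 1)"
    by (rule aff_tree[OF pp_lt1 pp_lt1 gI_piece3])
  show ?case unfolding j by (simp only: e1 e2 append.simps(1)) (intro rep_append r1 r2 r3)
next
  case (Cons L P)
  have ji: "Suc j \<le> i" using Cons(2) by simp
  have r1: "rep (gI i) (ivs L (pp j) (pp (Suc j))) (ivs L (pp j) (pp (Suc j)))"
  proof (rule aff_tree[OF pp_lt_Suc pp_lt_Suc aff_idI[OF _ pp_lt_Suc]])
    fix t assume "t \<le> pp (Suc j)"
    then have "t \<le> pp i" using pp_mono[OF ji] by simp
    then show "gI i t = t" by (rule gI_id)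
  qed
  have r2: "rep (gI i) (ivs (spine (P @ Node x y # R)) (pp (Suc j)) 1) (ivs (spine (P @ x # y # R)) (pp (Suc j)) 1)"
    using Cons(1)[of "Suc j"] Cons(2) by simp
  show ?case using rep_append[OF r1 r2] by simp
qed

lemma SS: "length L \<ge> i + 2 \<Longrightarrow>
  rep (gI i) (ivs (spine (take i L @ [Node (L ! i) (L ! (i + 1))] @ drop (i + 2) L)) 0 1) (ivs (spine L) 0 1)"
proof -
  assume l: "length L \<ge> i + 2"
  have dL: "drop i L = L ! i # L ! (i + 1) # drop (i + 2) L"
    using Cons_nth_drop_Suc[of i L] Cons_nth_drop_Suc[of "Suc i" L] l by simp
  have L: "L = take i L @ L ! i # L ! (i + 1) # drop (i + 2) L"
    using dL append_take_drop_id[of i L] by simp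
  have len: "0 + length (take i L) = i" using l by simp
  from SS_gen[OF len, of "L ! i" "L ! (i + 1)" "drop (i + 2) L"]
  show ?thesis using L by simp
qed

fun comb :: "nat \<Rightarrow> tree list \<Rightarrow> tree" where
  "comb 0 xs = hd xs"
| "comb (Suc m) xs = Node (comb m xs) (xs ! Suc m)"

lemma comb_shift: "comb m (Node x y # zs) = comb (Suc m) (x # y # zs)"
  by (induct m) auto

lemma rep_id: "rep (\<lambda>x. x) (ivs U 0 1) (ivs U 0 1)"
  by (rule aff_tree) (auto simp: aff_def)

lemma GP: "length L \<ge> i + r + 1 \<Longrightarrow>
  rep (gI i ^^ r) (ivs (spine (take i L @ [comb r (drop i L)] @ drop (i + r + 1) L)) 0 1) (ivs (spine L) 0 1)"
proof (induct r arbitrary: L)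
  case 0
  have "take i L @ [comb 0 (drop i L)] @ drop (i + 0 + 1) L = L"
    using 0 by (simp add: hd_drop_conv_nth id_take_nth_drop[symmetric])
  then show ?case using rep_id by simp
next
  case (Suc r)
  define L1 where "L1 = take i L @ [Node (L ! i) (L ! (i + 1))] @ drop (i + 2) L"
  have l1: "length L1 = length L - 1" using Suc(2) unfolding L1_def by simp
  have IH: "rep (gI i ^^ r) (ivs (spine (take i L1 @ [comb r (drop i L1)] @ drop (i + r + 1) L1)) 0 1) (ivs (spine L1) 0 1)"
    using Suc(1)[of L1] Suc(2) l1 by simp
  have ss: "rep (gI i) (ivs (spine L1) 0 1) (ivs (spine L) 0 1)" using SS[of i L] Suc(2) unfolding L1_def by simp
  have tk: "take i L1 = take i L" using Suc(2) unfolding L1_def by simp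
  have dr: "drop i L1 = Node (L ! i) (L ! (i + 1)) # drop (i + 2) L" using Suc(2) unfolding L1_def by simp
  have dL: "drop i L = L ! i # L ! (i + 1) # drop (i + 2) L"
    using Cons_nth_drop_Suc[of i L] Cons_nth_drop_Suc[of "Suc i" L] Suc(2) by simp
  have cm: "comb r (drop i L1) = comb (Suc r) (drop i L)" unfolding dr dL comb_shift ..
  have dd: "drop (i + r + 1) L1 = drop (i + Suc r + 1) L" using Suc(2) unfolding L1_def by (simp add: add.commute)
  have fs: "gI i ^^ Suc r = gI i \<circ> (gI i ^^ r)" by simp
  show ?case unfolding fs using rep_comp[OF IH ss] unfolding tk cm dd .
qed

fun SLK :: "(nat \<times> nat) list \<Rightarrow> nat \<Rightarrow> tree list" where
  "SLK [] K = replicate K Leaf"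
| "SLK ((i, r) # ps) K = (let L = SLK ps K in take i L @ [comb r (drop i L)] @ drop (i + r + 1) L)"

lemma SLK_rep: "K \<ge> Nr ps \<Longrightarrow> length (SLK ps K) = K - sumr ps \<and>
   rep (posI ps) (ivs (spine (SLK ps K)) 0 1) (ivs (spine (replicate K Leaf)) 0 1)"
proof (induct ps)
  case Nil then show ?case using rep_id by simp
next
  case (Cons p ps)
  obtain i r where p: "p = (i, r)" by (cases p)
  define L where "L = SLK ps K"
  have K: "K \<ge> Nr ps" "K \<ge> i + r + sumr ps + 1" using Cons(2) p by auto
  have IH: "length L = K - sumr ps" "rep (posI ps) (ivs (spine L) 0 1) (ivs (spine (replicate K Leaf)) 0 1)"
    using Cons(1)[OF K(1)] unfolding L_def by auto
  have lL: "length L \<ge> i + r + 1" using IH(1) K(2) by simp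
  have "rep (posI ps \<circ> (gI i ^^ r)) (ivs (spine (take i L @ [comb r (drop i L)] @ drop (i + r + 1) L)) 0 1) (ivs (spine (replicate K Leaf)) 0 1)"
    by (rule rep_comp[OF GP[OF lL] IH(2)])
  moreover have "length (take i L @ [comb r (drop i L)] @ drop (i + r + 1) L) = K - sumr (p # ps)"
    using lL IH(1) p by simp
  moreover have "posI (p # ps) = posI ps \<circ> (gI i ^^ r)" by (simp add: p)
  moreover have "SLK (p # ps) K = take i L @ [comb r (drop i L)] @ drop (i + r + 1) L"
    by (simp add: p L_def Let_def)
  ultimately show ?case by metis
qed

definition std :: "real \<Rightarrow> real \<Rightarrow> bool" where
  "std a b \<longleftrightarrow> (\<exists>k n::nat. a = real k / 2 ^ n \<and> b = (real k + 1) / 2 ^ n)"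

definition good :: "(real \<Rightarrow> real) \<Rightarrow> real \<Rightarrow> real \<Rightarrow> bool" where
  "good g a b \<longleftrightarrow> std a b \<and> (\<exists>c d. std c d \<and> aff g a b c d)"

lemma std01: "std 0 1"
  unfolding std_def by (rule exI[of _ 0], rule exI[of _ 0]) simp

lemma std_lt: "std a b \<Longrightarrow> a < b"
  unfolding std_def by (auto simp: divide_strict_right_mono)

lemma std_halves: "std a b \<Longrightarrow> std a ((a + b) / 2) \<and> std ((a + b) / 2) b"
proof -
  assume "std a b"
  then obtain k n where kn: "a = real k / 2 ^ n" "b = (real k + 1) / 2 ^ n" unfolding std_def by auto
  have "a = real (2 * k) / 2 ^ Suc n" "(a + b) / 2 = (real (2 * k) + 1) / 2 ^ Suc n"
    "(a + b) / 2 = real (2 * k + 1) / 2 ^ Suc n" "b = (real (2 * k + 1) + 1) / 2 ^ Suc n"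
    unfolding kn by (simp_all add: divide_simps)
  then show ?thesis unfolding std_def by blast
qed

lemma odd_pow_eq:
  assumes "(2 * k + 1) * 2 ^ n' = (2 * k' + 1) * (2::nat) ^ n"
  shows "n = n' \<and> k = k'"
proof -
  have main: "n = n' \<and> k = k'" if h: "(2 * k + 1) * 2 ^ n' = (2 * k' + 1) * (2::nat) ^ n" and nn: "n \<le> n'"
    for k k' n n' :: nat
  proof -
    obtain e where e: "n' = n + e" using nn le_Suc_ex by blast
    have q: "(2 * k + 1) * 2 ^ (n + e) = ((2 * k + 1) * 2 ^ e) * (2::nat) ^ n"
      by (metis mult.assoc mult.commute power_add)
    have "((2 * k + 1) * 2 ^ e) * 2 ^ n = (2 * k' + 1) * 2 ^ n" using h q unfolding e by simp
    then have h2: "(2 * k + 1) * 2 ^ e = 2 * k' + 1"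
      using mult_right_cancel[of "(2::nat) ^ n" "(2 * k + 1) * 2 ^ e" "2 * k' + 1"] by (simp only: power_not_zero) simp
    have "e = 0"
    proof (rule ccontr)
      assume "e \<noteq> 0"
      then have "even ((2 * k + 1) * (2::nat) ^ e)" by simp
      with h2 show False by simp
    qed
    then show ?thesis using h2 e by simp
  qed
  show ?thesis
  proof (cases "n \<le> n'")
    case True then show ?thesis using main[OF assms] by simp
  next
    case False then show ?thesis using main[OF assms[symmetric]] by simp
  qed
qed

lemma std_mid_eq: "std a b \<Longrightarrow> std c d \<Longrightarrow> a + b = c + d \<Longrightarrow> a = c \<and> b = d"
proof -
  assume "std a b" "std c d" and s: "a + b = c + d"
  then obtain k n k' n' where kn: "a = real k / 2 ^ n" "b = (real k + 1) / 2 ^ n"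
    and kn': "c = real k' / 2 ^ n'" "d = (real k' + 1) / 2 ^ n'" unfolding std_def by auto
  have "(2 * real k + 1) / 2 ^ n = (2 * real k' + 1) / 2 ^ n'" using s unfolding kn kn' by (simp add: add_divide_distrib)
  then have "(2 * real k + 1) * 2 ^ n' = (2 * real k' + 1) * 2 ^ n" by (simp add: divide_simps)
  moreover have "real ((2 * k + 1) * 2 ^ n') = (2 * real k + 1) * 2 ^ n'" "real ((2 * k' + 1) * 2 ^ n) = (2 * real k' + 1) * 2 ^ n"
    by (simp_all add: algebra_simps)
  ultimately have "real ((2 * k + 1) * 2 ^ n') = real ((2 * k' + 1) * 2 ^ n)" by simp
  then have "(2 * k + 1) * 2 ^ n' = (2 * k' + 1) * (2::nat) ^ n" by (simp only: of_nat_eq_iff)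
  then have "n = n' \<and> k = k'" by (rule odd_pow_eq)
  then show ?thesis unfolding kn kn' by simp
qed

lemma std_leaves: "std a b \<Longrightarrow> x \<in> set (ivs U a b) \<Longrightarrow> std (fst x) (snd x)"
  by (induct U arbitrary: a b) (auto dest: std_halves)

lemma leaf_bounds: "a < b \<Longrightarrow> x \<in> set (ivs U a b) \<Longrightarrow> a \<le> fst x \<and> fst x < snd x \<and> snd x \<le> b \<and> snd x - fst x \<le> b - a"
proof (induct U arbitrary: a b)
  case Leaf then show ?case by simp
next
  case (Node l r)
  show ?case
  proof (cases "x \<in> set (ivs l a ((a + b) / 2))")
    case True
    with Node(1)[of a "(a + b) / 2"] Node(3) show ?thesis by auto
  next
    case False
    then have "x \<in> set (ivs r ((a + b) / 2) b)" using Node(4) by simp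
    with Node(2)[of "(a + b) / 2" b] Node(3) show ?thesis by auto
  qed
qed

lemma leaf_small: "a < b \<Longrightarrow> U \<noteq> Leaf \<Longrightarrow> x \<in> set (ivs U a b) \<Longrightarrow> snd x - fst x \<le> (b - a) / 2"
proof -
  assume ab: "a < b" and U: "U \<noteq> Leaf" and x: "x \<in> set (ivs U a b)"
  obtain l r where U: "U = Node l r" using U by (cases U) auto
  show ?thesis
  proof (cases "x \<in> set (ivs l a ((a + b) / 2))")
    case True then show ?thesis using leaf_bounds[OF _ True] ab by auto
  next
    case False
    then have xr: "x \<in> set (ivs r ((a + b) / 2) b)" using x U by simp
    show ?thesis using leaf_bounds[OF _ xr] ab by auto
  qed
qed

lemma ivs_ne: "ivs U a b \<noteq> []"
  by (induct U arbitrary: a b) auto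

lemma ivs_last: "snd (last (ivs U a b)) = b"
  by (induct U arbitrary: a b) (auto simp: ivs_ne)

lemma ivs_hd: "fst (hd (ivs U a b)) = a"
  by (induct U arbitrary: a b) (auto simp: ivs_ne)

lemma good_halves: "good g a b \<Longrightarrow> good g a ((a + b) / 2) \<and> good g ((a + b) / 2) b"
proof -
  assume "good g a b"
  then obtain c d where s: "std a b" "std c d" "aff g a b c d" unfolding good_def by auto
  have "aff g a ((a + b) / 2) c ((c + d) / 2)" "aff g ((a + b) / 2) b ((c + d) / 2) d"
    using aff_left[OF std_lt[OF s(1)] s(3)] aff_right[OF std_lt[OF s(1)] s(3)] by auto
  then show ?thesis using std_halves[OF s(1)] std_halves[OF s(2)] unfolding good_def by blast
qed

lemma cherries_Node: "cherries (Node l r) k = (if l = Leaf \<and> r = Leaf then {k} else cherries l k \<union> cherries r (k + nleaves l))"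
  by (cases l; cases r) auto

lemma nleaves_ge1: "nleaves U \<ge> 1"
  by (induct U) auto

lemma nleaves_carets: "nleaves U = carets U + 1"
  by (induct U) auto

lemma cherries_bound: "j \<in> cherries U k \<Longrightarrow> k \<le> j \<and> j + 2 \<le> k + nleaves U"
proof (induct U arbitrary: k)
  case Leaf then show ?case by simp
next
  case (Node l r)
  show ?case
  proof (cases "l = Leaf \<and> r = Leaf")
    case True then show ?thesis using Node(3) by simp
  next
    case False
    then have "j \<in> cherries l k \<or> j \<in> cherries r (k + nleaves l)" using Node(3) unfolding cherries_Node if_not_P[OF False] by simp
    then show ?thesis using Node(1)[of k] Node(2)[of "k + nleaves l"] nleaves_ge1[of l] nleaves_ge1[of r] by auto
  qed
qed

fun mcount :: "(real \<Rightarrow> real) \<Rightarrow> tree \<Rightarrow> real \<Rightarrow> real \<Rightarrow> nat" where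
  "mcount g Leaf a b = 1"
| "mcount g (Node l r) a b = (if good g a b then 1 else mcount g l a ((a + b) / 2) + mcount g r ((a + b) / 2) b)"

lemma mcount_inv: "(\<forall>x\<in>set (ivs U1 a b). good g (fst x) (snd x)) \<Longrightarrow> (\<forall>x\<in>set (ivs U2 a b). good g (fst x) (snd x)) \<Longrightarrow>
   mcount g U1 a b = mcount g U2 a b"
proof (induct U1 arbitrary: U2 a b)
  case Leaf
  then have "good g a b" by simp
  then show ?case by (cases U2) auto
next
  case (Node l r)
  show ?case
  proof (cases "good g a b")
    case True then show ?thesis by (cases U2) auto
  next
    case False
    then obtain l2 r2 where U2: "U2 = Node l2 r2" using Node(4) by (cases U2) auto
    have "mcount g l a ((a + b) / 2) = mcount g l2 a ((a + b) / 2)"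
      using Node(1)[of a "(a + b) / 2" l2] Node(3,4) U2 by simp
    moreover have "mcount g r ((a + b) / 2) b = mcount g r2 ((a + b) / 2) b"
      using Node(2)[of "(a + b) / 2" b r2] Node(3,4) U2 by simp
    ultimately show ?thesis using False U2 by simp
  qed
qed

definition gcherry :: "(real \<Rightarrow> real) \<Rightarrow> tree \<Rightarrow> real \<Rightarrow> real \<Rightarrow> nat \<Rightarrow> nat \<Rightarrow> bool" where
  "gcherry g U a b k j \<longleftrightarrow> j \<in> cherries U k \<and> (\<exists>p q. ivs U a b ! (j - k) = (p, (p + q) / 2) \<and>
      ivs U a b ! (j - k + 1) = ((p + q) / 2, q) \<and> good g p q)"

lemma gcherry_left: "gcherry g l a ((a + b) / 2) k j \<Longrightarrow> \<not> (l = Leaf \<and> r = Leaf) \<Longrightarrow> gcherry g (Node l r) a b k j"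
proof -
  assume h: "gcherry g l a ((a + b) / 2) k j" and nl: "\<not> (l = Leaf \<and> r = Leaf)"
  have j: "j \<in> cherries l k" using h unfolding gcherry_def by simp
  have b: "j - k + 1 < nleaves l" using cherries_bound[OF j] by arith
  show ?thesis using h b nl unfolding gcherry_def by (auto simp: cherries_Node nth_append)
qed

lemma gcherry_right: "gcherry g r ((a + b) / 2) b (k + nleaves l) j \<Longrightarrow> \<not> (l = Leaf \<and> r = Leaf) \<Longrightarrow> gcherry g (Node l r) a b k j"
proof -
  assume h: "gcherry g r ((a + b) / 2) b (k + nleaves l) j" and nl: "\<not> (l = Leaf \<and> r = Leaf)"
  have j: "j \<in> cherries r (k + nleaves l)" using h unfolding gcherry_def by simp
  have b: "k + nleaves l \<le> j" using cherries_bound[OF j] by simp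
  then have e: "j - k = (j - (k + nleaves l)) + nleaves l" "j - k + 1 = (j - (k + nleaves l) + 1) + nleaves l" by simp_all
  have c: "j \<in> cherries (Node l r) k" using j unfolding cherries_Node if_not_P[OF nl] by simp
  show ?thesis using h c unfolding gcherry_def e by (auto simp: nth_append)
qed

lemma cherry_exists: "std a b \<Longrightarrow> good g a b \<Longrightarrow> U \<noteq> Leaf \<Longrightarrow> \<exists>j. gcherry g U a b k j"
proof (induct U arbitrary: a b k)
  case Leaf then show ?case by simp
next
  case (Node l r)
  have gh: "good g a ((a + b) / 2)" "good g ((a + b) / 2) b" using good_halves[OF Node(4)] by auto
  have sh: "std a ((a + b) / 2)" "std ((a + b) / 2) b" using std_halves[OF Node(3)] by auto
  show ?case
  proof (cases "l = Leaf \<and> r = Leaf")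
    case True
    then have "gcherry g (Node l r) a b k k" using Node(4) unfolding gcherry_def by (auto simp: cherries_Node)
    then show ?thesis by blast
  next
    case False
    show ?thesis
    proof (cases "l = Leaf")
      case False
      then obtain j where "gcherry g l a ((a + b) / 2) k j" using Node(1)[OF sh(1) gh(1)] by blast
      then show ?thesis using gcherry_left \<open>\<not> (l = Leaf \<and> r = Leaf)\<close> by blast
    next
      case True
      then have "r \<noteq> Leaf" using False by simp
      then obtain j where "gcherry g r ((a + b) / 2) b (k + nleaves l) j" using Node(2)[OF sh(2) gh(2)] by blast
      then show ?thesis using gcherry_right \<open>\<not> (l = Leaf \<and> r = Leaf)\<close> by blast
    qed
  qed
qed

lemma mcount_ne: "std a b \<Longrightarrow> (\<forall>x\<in>set (ivs U a b). good g (fst x) (snd x)) \<Longrightarrow> mcount g U a b \<noteq> nleaves U \<Longrightarrow>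
   \<exists>j. gcherry g U a b k j"
proof (induct U arbitrary: a b k)
  case Leaf then show ?case by simp
next
  case (Node l r)
  show ?case
  proof (cases "good g a b")
    case True then show ?thesis using cherry_exists[OF Node(3) True] by blast
  next
    case False
    have sh: "std a ((a + b) / 2)" "std ((a + b) / 2) b" using std_halves[OF Node(3)] by auto
    have ne: "mcount g l a ((a + b) / 2) \<noteq> nleaves l \<or> mcount g r ((a + b) / 2) b \<noteq> nleaves r"
      using Node(5) False by auto
    have nl: "\<not> (l = Leaf \<and> r = Leaf)" using ne by auto
    show ?thesis
    proof (cases "mcount g l a ((a + b) / 2) \<noteq> nleaves l")
      case True
      then obtain j where "gcherry g l a ((a + b) / 2) k j" using Node(1)[OF sh(1)] Node(4) by auto
      then show ?thesis using gcherry_left nl by blast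
    next
      case False
      then have "mcount g r ((a + b) / 2) b \<noteq> nleaves r" using ne by simp
      then obtain j where "gcherry g r ((a + b) / 2) b (k + nleaves l) j" using Node(2)[OF sh(2)] Node(4) by auto
      then show ?thesis using gcherry_right nl by blast
    qed
  qed
qed

lemma cherry_T: "std a b \<Longrightarrow> i + 1 < nleaves T \<Longrightarrow> ivs T a b ! i = (c, m) \<Longrightarrow> ivs T a b ! (i + 1) = (m, d) \<Longrightarrow>
   std c d \<Longrightarrow> m = (c + d) / 2 \<Longrightarrow> i + k \<in> cherries T k"
proof (induct T arbitrary: a b i k)
  case Leaf then show ?case by simp
next
  case (Node l r)
  define mm where "mm = (a + b) / 2"
  have sh: "std a mm" "std mm b" using std_halves[OF Node(3)] unfolding mm_def by auto
  have ab: "a < b" using std_lt[OF Node(3)] .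
  show ?case
  proof (cases "l = Leaf \<and> r = Leaf")
    case True then show ?thesis using Node(4) by (simp add: cherries_Node)
  next
    case nlr: False
    have ch: "cherries (Node l r) k = cherries l k \<union> cherries r (k + nleaves l)"
      using nlr by (simp add: cherries_Node)
    have iv: "ivs (Node l r) a b = ivs l a mm @ ivs r mm b" unfolding mm_def by simp
    consider (L) "i + 1 < nleaves l" | (R) "nleaves l \<le> i" | (M) "i + 1 = nleaves l" by linarith
    then show ?thesis
    proof cases
      case L
      have B: "ivs l a mm ! i = (c, m)" using Node(5) L unfolding iv by (simp add: nth_append)
      have C: "ivs l a mm ! (i + 1) = (m, d)" using Node(6) L unfolding iv by (simp add: nth_append)
      have "i + k \<in> cherries l k" by (rule Node(1)[OF sh(1) L B C Node(7,8)])
      then show ?thesis unfolding ch by simp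
    next
      case R
      have e: "i + k = (i - nleaves l) + (k + nleaves l)" using R by simp
      have A: "i - nleaves l + 1 < nleaves r" using Node(4) R by simp
      have B: "ivs r mm b ! (i - nleaves l) = (c, m)" using Node(5) R unfolding iv by (simp add: nth_append)
      have C: "ivs r mm b ! (i - nleaves l + 1) = (m, d)" using Node(6) R unfolding iv by (simp add: nth_append Suc_diff_le)
      have "(i - nleaves l) + (k + nleaves l) \<in> cherries r (k + nleaves l)"
        by (rule Node(2)[OF sh(2) A B C Node(7,8)])
      then show ?thesis unfolding ch e by simp
    next
      case M
      have ii: "nleaves l - Suc 0 = i" using M by simp
      have lastl: "ivs l a mm ! i = last (ivs l a mm)" by (simp add: last_conv_nth ivs_ne ii)
      have x1: "ivs l a mm ! i = (c, m)" using Node(5) M unfolding iv by (simp add: nth_append)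
      have x2: "ivs r mm b ! 0 = (m, d)" using Node(6) M unfolding iv by (simp add: nth_append)
      have mm: "m = mm" using ivs_last[of l a mm] lastl x1 by (metis snd_conv)
      have "i < length (ivs l a mm)" using M by simp
      then have x1s: "(c, m) \<in> set (ivs l a mm)" using x1 nth_mem by metis
      have "0 < length (ivs r mm b)" using nleaves_ge1[of r] by simp
      then have x2s: "(m, d) \<in> set (ivs r mm b)" using x2 nth_mem by metis
      have amm: "a < mm" "mm < b" using ab unfolding mm_def by simp_all
      have "a + b = c + d" using mm Node(8) unfolding mm_def by simp
      then have cd: "c = a" "d = b" using std_mid_eq[OF Node(3) Node(7)] by auto
      have "l = Leaf"
      proof (rule ccontr)
        assume "l \<noteq> Leaf"
        from leaf_small[OF amm(1) this x1s] show False using cd mm amm by simp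
      qed
      moreover have "r = Leaf"
      proof (rule ccontr)
        assume "r \<noteq> Leaf"
        from leaf_small[OF amm(2) this x2s] show False using cd mm amm by simp
      qed
      ultimately show ?thesis using nlr by simp
    qed
  qed
qed

lemma represents_good: "represents g S T \<Longrightarrow> \<forall>x\<in>set (ivs S 0 1). good g (fst x) (snd x)"
proof
  fix x assume R: "represents g S T" and x: "x \<in> set (ivs S 0 1)"
  then obtain k where k: "k < nleaves S" "x = ivs S 0 1 ! k" by (metis in_set_conv_nth length_ivs)
  have kT: "k < nleaves T" using R k unfolding represents_def by simp
  have s1: "std (fst x) (snd x)" using std_leaves[OF std01 x] .
  have s2: "std (fst (ivs T 0 1 ! k)) (snd (ivs T 0 1 ! k))" using std_leaves[OF std01 nth_mem[of k "ivs T 0 1"]] kT by simp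
  have "aff g (fst x) (snd x) (fst (ivs T 0 1 ! k)) (snd (ivs T 0 1 ! k))"
    using R k unfolding represents_def aff_def by auto
  then show "good g (fst x) (snd x)" using s1 s2 unfolding good_def by blast
qed

lemma reduced_mcount: assumes R: "represents g S T" and red: "reduced S T"
  shows "mcount g S 0 1 = nleaves S"
proof (rule ccontr)
  assume "mcount g S 0 1 \<noteq> nleaves S"
  then obtain j where "gcherry g S 0 1 0 j" using mcount_ne[OF std01 represents_good[OF R]] by blast
  then obtain p q where j: "j \<in> cherries S 0" "ivs S 0 1 ! j = (p, (p + q) / 2)"
    "ivs S 0 1 ! (j + 1) = ((p + q) / 2, q)" "good g p q" unfolding gcherry_def by auto
  obtain c d where cd: "std c d" "aff g p q c d" "std p q" using j(4) unfolding good_def by auto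
  have pq: "p < q" using std_lt[OF cd(3)] .
  have jb: "j + 1 < nleaves S" using cherries_bound[OF j(1)] by simp
  have eqn: "nleaves S = nleaves T" using R unfolding represents_def by simp
  have Rf: "\<And>k t. k < nleaves S \<Longrightarrow> fst (ivs S 0 1 ! k) \<le> t \<Longrightarrow> t \<le> snd (ivs S 0 1 ! k) \<Longrightarrow>
        g t = fst (ivs T 0 1 ! k) + (snd (ivs T 0 1 ! k) - fst (ivs T 0 1 ! k))
              / (snd (ivs S 0 1 ! k) - fst (ivs S 0 1 ! k)) * (t - fst (ivs S 0 1 ! k))"
    using R unfolding represents_def by blast
  define m where "m = (p + q) / 2"
  have pm: "p < m" "m < q" using pq unfolding m_def by simp_all
  have af: "\<And>t. p \<le> t \<Longrightarrow> t \<le> q \<Longrightarrow> g t = c + (d - c) / (q - p) * (t - p)"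
    using cd(2) unfolding aff_def by blast
  have gp: "g p = c" using af[of p] pq by simp
  have gq: "g q = d" using af[of q] pq by simp
  have "(d - c) / (q - p) * (m - p) = (d - c) / 2" unfolding m_def using pq by (simp add: divide_simps)
  then have gm: "g m = (c + d) / 2" using af[of m] pm by simp
  have T1: "fst (ivs T 0 1 ! j) = g p" using Rf[of j p] jb j(2) pm unfolding m_def by simp
  have "g m = fst (ivs T 0 1 ! j) + (snd (ivs T 0 1 ! j) - fst (ivs T 0 1 ! j)) / (m - p) * (m - p)"
    using Rf[of j m] jb j(2) pm unfolding m_def[symmetric] by simp
  then have T2: "snd (ivs T 0 1 ! j) = g m" using pm by simp
  have T3: "fst (ivs T 0 1 ! (j + 1)) = g m" using Rf[of "j + 1" m] jb j(3) pm unfolding m_def by simp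
  have "g q = fst (ivs T 0 1 ! (j + 1)) + (snd (ivs T 0 1 ! (j + 1)) - fst (ivs T 0 1 ! (j + 1))) / (q - m) * (q - m)"
    using Rf[of "j + 1" q] jb j(3) pm unfolding m_def[symmetric] by simp
  then have T4: "snd (ivs T 0 1 ! (j + 1)) = g q" using pm by simp
  have "j + 0 \<in> cherries T 0"
  proof (rule cherry_T[OF std01, of j T c "(c + d) / 2" d])
    show "j + 1 < nleaves T" using jb eqn by simp
    show "ivs T 0 1 ! j = (c, (c + d) / 2)" using T1 T2 gp gm by (metis prod.collapse)
    show "ivs T 0 1 ! (j + 1) = ((c + d) / 2, d)" using T3 T4 gq gm by (metis prod.collapse)
  qed (use cd in auto)
  then show False using j(1) red unfolding reduced_def by auto
qed

lemma comb_ne: "r \<ge> 1 \<Longrightarrow> comb r xs \<noteq> Leaf"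
  by (cases r) auto

lemma Nr_ge: "ps \<noteq> [] \<Longrightarrow> Nr ps \<ge> sumr ps + 1"
  by (cases ps) auto

lemma last_SLK: "ps \<noteq> [] \<Longrightarrow> \<forall>p\<in>set ps. snd p \<ge> 1 \<Longrightarrow> last (SLK ps (Nr ps)) \<noteq> Leaf"
proof (induct ps)
  case Nil then show ?case by simp
next
  case (Cons p ps)
  obtain i r where p: "p = (i, r)" by (cases p)
  have r: "r \<ge> 1" using Cons(3) p by auto
  define K where "K = Nr (p # ps)"
  define L where "L = SLK ps K"
  have K: "K \<ge> Nr ps" "K \<ge> i + r + sumr ps + 1" unfolding K_def p by auto
  have lL: "length L = K - sumr ps" using SLK_rep[OF K(1)] unfolding L_def by simp
  have res: "SLK (p # ps) K = take i L @ [comb r (drop i L)] @ drop (i + r + 1) L"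
    by (simp add: p L_def Let_def)
  show ?case
  proof (cases "length L = i + r + 1")
    case True
    then have "drop (i + r + 1) L = []" by simp
    then show ?thesis using comb_ne[OF r] unfolding K_def[symmetric] res by simp
  next
    case False
    then have gt: "length L > i + r + 1" using lL K(2) by simp
    then have KN: "K = Nr ps" using lL unfolding K_def p by auto
    have ne: "ps \<noteq> []" using KN gt lL K(2) by auto
    have "last (SLK (p # ps) K) = last L" unfolding res using gt by (simp add: last_drop)
    moreover have "last L \<noteq> Leaf" using Cons(1)[OF ne] Cons(3) KN unfolding L_def by simp
    ultimately show ?thesis unfolding K_def by simp
  qed
qed

lemma vine_nleaves: "nleaves (spine (replicate n Leaf)) = n + 1"
  by (induct n) auto

lemma vine_cherries: "cherries (spine (replicate n Leaf)) k \<subseteq> {k + n - 1}"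
proof (induct n arbitrary: k)
  case 0 then show ?case by simp
next
  case (Suc n)
  show ?case
  proof (cases n)
    case 0 then show ?thesis by simp
  next
    case (Suc n')
    have "spine (replicate n Leaf) \<noteq> Leaf" using Suc by simp
    then have "cherries (spine (replicate (Suc n) Leaf)) k = cherries (spine (replicate n Leaf)) (k + 1)"
      by (simp add: cherries_Node)
    then show ?thesis using Suc.hyps[of "k + 1"] by auto
  qed
qed

lemma nleaves_spine_ne: "xs \<noteq> [] \<Longrightarrow> nleaves (spine xs) \<ge> 2"
proof (cases xs)
  case (Cons a list)
  then show ?thesis using nleaves_ge1[of a] nleaves_ge1[of "spine list"] by simp
qed simp

lemma spine_last_cherry: "Ls \<noteq> [] \<Longrightarrow> last Ls \<noteq> Leaf \<Longrightarrow> k + nleaves (spine Ls) - 2 \<notin> cherries (spine Ls) k"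
proof (induct Ls arbitrary: k)
  case Nil then show ?case by simp
next
  case (Cons x xs)
  show ?case
  proof (cases "xs = []")
    case True
    then have x: "x \<noteq> Leaf" using Cons(3) by simp
    then have c: "cherries (spine (x # xs)) k = cherries x k" using True by (simp add: cherries_Node)
    show ?thesis
    proof
      assume "k + nleaves (spine (x # xs)) - 2 \<in> cherries (spine (x # xs)) k"
      then have "k + nleaves x - 1 \<in> cherries x k" using True c by simp
      from cherries_bound[OF this] nleaves_ge1[of x] show False by arith
    qed
  next
    case False
    have sn: "spine xs \<noteq> Leaf" using False by (cases xs) auto
    have c: "cherries (spine (x # xs)) k = cherries x k \<union> cherries (spine xs) (k + nleaves x)"
      using sn by (simp add: cherries_Node)
    have n2: "nleaves (spine xs) \<ge> 2" using nleaves_spine_ne[OF False] .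
    have IH: "k + nleaves x + nleaves (spine xs) - 2 \<notin> cherries (spine xs) (k + nleaves x)"
      using Cons(1)[OF False, of "k + nleaves x"] Cons(3) False by simp
    show ?thesis
    proof
      assume a: "k + nleaves (spine (x # xs)) - 2 \<in> cherries (spine (x # xs)) k"
      show False
      proof (cases "k + nleaves (spine (x # xs)) - 2 \<in> cherries x k")
        case True
        have "nleaves (spine (x # xs)) = nleaves x + nleaves (spine xs)" by simp
        with cherries_bound[OF True] n2 show False by arith
      next
        case False
        then show False using a c IH by (simp add: add.assoc)
      qed
    qed
  qed
qed

lemma exists_diagram:
  assumes ne: "ps \<noteq> []" and r: "\<forall>p\<in>set ps. snd p \<ge> 1"
  shows "represents (posI ps) (spine (SLK ps (Nr ps))) (spine (replicate (Nr ps) Leaf)) \<and>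
         reduced (spine (SLK ps (Nr ps))) (spine (replicate (Nr ps) Leaf)) \<and>
         nleaves (spine (SLK ps (Nr ps))) = Nr ps + 1"
proof -
  define N where "N = Nr ps"
  define Ls where "Ls = SLK ps N"
  have R: "length Ls = N - sumr ps" "rep (posI ps) (ivs (spine Ls) 0 1) (ivs (spine (replicate N Leaf)) 0 1)"
    using SLK_rep[of ps N] unfolding N_def Ls_def by auto
  have N1: "N \<ge> sumr ps + 1" using Nr_ge[OF ne] unfolding N_def .
  have Lne: "Ls \<noteq> []" using R(1) N1 by auto
  have nl: "nleaves (spine Ls) = N + 1"
    using R(2) vine_nleaves[of N] unfolding rep_def by simp
  have rep1: "represents (posI ps) (spine Ls) (spine (replicate N Leaf))"
    unfolding represents_def rooted_tree_def
  proof (intro conjI allI impI)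
    show "spine Ls \<noteq> Leaf" using Lne by (cases Ls) auto
    show "spine (replicate N Leaf) \<noteq> Leaf" using N1 by (cases N) auto
    show "nleaves (spine Ls) = nleaves (spine (replicate N Leaf))" using nl vine_nleaves by simp
    fix k t assume k: "k < nleaves (spine Ls)"
      and t: "fst (ivs (spine Ls) 0 1 ! k) \<le> t \<and> t \<le> snd (ivs (spine Ls) 0 1 ! k)"
    then show "posI ps t = fst (ivs (spine (replicate N Leaf)) 0 1 ! k) +
      (snd (ivs (spine (replicate N Leaf)) 0 1 ! k) - fst (ivs (spine (replicate N Leaf)) 0 1 ! k)) /
      (snd (ivs (spine Ls) 0 1 ! k) - fst (ivs (spine Ls) 0 1 ! k)) * (t - fst (ivs (spine Ls) 0 1 ! k))"
      using R(2) unfolding rep_def aff_def by auto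
  qed
  have lastL: "last Ls \<noteq> Leaf" using last_SLK[OF ne r] unfolding Ls_def N_def .
  have red: "reduced (spine Ls) (spine (replicate N Leaf))"
    unfolding reduced_def
  proof -
    have "N - 1 \<notin> cherries (spine Ls) 0" using spine_last_cherry[OF Lne lastL, of 0] nl by simp
    then show "cherries (spine Ls) 0 \<inter> cherries (spine (replicate N Leaf)) 0 = {}"
      using vine_cherries[of N 0] by auto
  qed
  show ?thesis using rep1 red nl unfolding Ls_def N_def by simp
qed

lemma part1:
  assumes p: "pos_nf ps"
  shows "(\<exists>S T. represents (posI ps) S T \<and> reduced S T) \<and>
             (\<forall>S T. represents (posI ps) S T \<and> reduced S T \<longrightarrow>
                    carets S = Nval ps \<and> carets T = Nval ps)"
proof -
  have ne: "ps \<noteq> []" and r: "\<forall>p\<in>set ps. snd p \<ge> 1" using p by (auto simp: pos_nf_def)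
  define S0 where "S0 = spine (SLK ps (Nr ps))"
  define T0 where "T0 = spine (replicate (Nr ps) Leaf)"
  have E: "represents (posI ps) S0 T0" "reduced S0 T0" "nleaves S0 = Nr ps + 1"
    using exists_diagram[OF ne r] unfolding S0_def T0_def by auto
  have N: "Nval ps = Nr ps" using Nval_Nr[OF ne] .
  show ?thesis
  proof (intro conjI allI impI)
    show "\<exists>S T. represents (posI ps) S T \<and> reduced S T" using E by blast
    fix S T assume ST: "represents (posI ps) S T \<and> reduced S T"
    have "nleaves S = mcount (posI ps) S 0 1" using reduced_mcount ST by metis
    also have "\<dots> = mcount (posI ps) S0 0 1"
      using mcount_inv represents_good ST E(1) by metis
    also have "\<dots> = nleaves S0" using reduced_mcount E(1,2) by metis
    finally have nS: "nleaves S = Nr ps + 1" using E(3) by simp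
    then show "carets S = Nval ps" using nleaves_carets[of S] N by simp
    have "nleaves T = nleaves S" using ST unfolding represents_def by simp
    then show "carets T = Nval ps" using nleaves_carets[of T] N nS by simp
  qed
qed

theorem proposition2:
  shows "(\<forall>ps. pos_nf ps \<longrightarrow>
            ((\<exists>S T. represents (posI ps) S T \<and> reduced S T) \<and>
             (\<forall>S T. represents (posI ps) S T \<and> reduced S T \<longrightarrow>
                    carets S = Nval ps \<and> carets T = Nval ps)) \<and>
            (\<exists>t. \<not> posR ps differentiable (at t) \<and>
                 (\<forall>s > t. posR ps differentiable (at s)) \<and>
                 posR ps t = real (Nval ps)) \<and>
            real (Dval ps) / 2 \<le> real (Nval ps) \<and> Nval ps \<le> Dval ps + 1)
       \<and> (\<exists>C K::real. C > 0 \<and>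
            (\<forall>ps. pos_nf ps \<longrightarrow>
               real (Nval ps) \<le> C * real (word_length (posR ps)) + K \<and>
               real (word_length (posR ps)) \<le> C * real (Nval ps) + K))"
proof -
  have A: "pos_nf ps \<Longrightarrow> ((\<exists>S T. represents (posI ps) S T \<and> reduced S T) \<and>
             (\<forall>S T. represents (posI ps) S T \<and> reduced S T \<longrightarrow>
                    carets S = Nval ps \<and> carets T = Nval ps)) \<and>
            (\<exists>t. \<not> posR ps differentiable (at t) \<and>
                 (\<forall>s > t. posR ps differentiable (at s)) \<and>
                 posR ps t = real (Nval ps)) \<and>
            real (Dval ps) / 2 \<le> real (Nval ps) \<and> Nval ps \<le> Dval ps + 1" for ps
  proof -
    assume p: "pos_nf ps"
    have ne: "ps \<noteq> []" and r: "\<forall>p\<in>set ps. snd p \<ge> 1" using p by (auto simp: pos_nf_def)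
    have X: "\<exists>t. \<not> posR ps differentiable (at t) \<and> (\<forall>s > t. posR ps differentiable (at s)) \<and>
                 posR ps t = real (Nval ps)" using part2[OF ne r] Nval_Nr[OF ne] by simp
    show ?thesis using part1[OF p] X pos_nf_bounds[OF p] by blast
  qed
  show ?thesis using A part4 by blast
qed

end
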